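(* Let $n\geq 3$ and let $\mathcal H_n$ be the universal homogeneous $K_n$-free graph. Then $\mathcal H_n$ is IY-homogeneous for every $\mathrm{Y}\in\{\mathrm{H},\mathrm{I},\mathrm{A},\mathrm{E},\mathrm{B},\mathrm{M}\}$, and $\mathcal H_n$ is not XY-homogeneous for any $\mathrm{X}\in\{\mathrm{H},\mathrm{M}\}$ and any $\mathrm{Y}\in\{\mathrm{H},\mathrm{I},\mathrm{A},\mathrm{E},\mathrm{B},\mathrm{M}\}$.
   Context: All graphs are undirected and loopless; subgraphs are induced. $\mathcal H_n$ is the Fraïssé limit of the class of finite $K_n$-free graphs; it is the unique countable graph such that for all finite disjoint $A,B\subseteq\mathcal H_n$ with $A$ $K_{n-1}$-free there is a vertex adjacent to every vertex of $A$ and to no vertex of $B$. For $\mathrm{X}\in\{\mathrm{H},\mathrm{M},\mathrm{I}\}$ an X-morphism is a homomorphism, monomorphism (injective homomorphism), or isomorphism onto its image. For $\mathrm{Y}\in\{\mathrm{H},\mathrm{I},\mathrm{A},\mathrm{E},\mathrm{B},\mathrm{M}\}$, a Y-morphism $G\to G$ is, respectively, an endomorphism, a self-embedding, an automorphism, a surjective endomorphism, a bijective endomorphism, or an injective endomorphism. $G$ is XY-homogeneous if every X-morphism between finite induced subgraphs of $G$ is the restriction of a Y-morphism $G\to G$. *)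

theory Defs
  imports Main "HOL-Library.Countable_Set"
begin

definition graph :: "'a set \<Rightarrow> ('a \<Rightarrow> 'a \<Rightarrow> bool) \<Rightarrow> bool" where
  "graph V E \<longleftrightarrow> (\<forall>x y. E x y \<longrightarrow> x \<in> V \<and> y \<in> V) \<and> (\<forall>x y. E x y \<longrightarrow> E y x) \<and> (\<forall>x. \<not> E x x)"

definition is_clique :: "('a \<Rightarrow> 'a \<Rightarrow> bool) \<Rightarrow> 'a set \<Rightarrow> bool" where
  "is_clique E S \<longleftrightarrow> (\<forall>x\<in>S. \<forall>y\<in>S. x \<noteq> y \<longrightarrow> E x y)"

definition K_free :: "nat \<Rightarrow> ('a \<Rightarrow> 'a \<Rightarrow> bool) \<Rightarrow> 'a set \<Rightarrow> bool" where
  "K_free k E S \<longleftrightarrow> \<not> (\<exists>C\<subseteq>S. finite C \<and> card C = k \<and> is_clique E C)"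

text \<open>(V,E) is (a copy of) the universal homogeneous K_n-free graph H_n:
  a countable K_n-free graph with the extension property.\<close>
definition is_Henson :: "nat \<Rightarrow> 'a set \<Rightarrow> ('a \<Rightarrow> 'a \<Rightarrow> bool) \<Rightarrow> bool" where
  "is_Henson n V E \<longleftrightarrow> graph V E \<and> countable V \<and> K_free n E V \<and>
     (\<forall>A B. finite A \<and> finite B \<and> A \<subseteq> V \<and> B \<subseteq> V \<and> A \<inter> B = {} \<and> K_free (n - 1) E A \<longrightarrow>
        (\<exists>v\<in>V. v \<notin> A \<and> v \<notin> B \<and> (\<forall>a\<in>A. E v a) \<and> (\<forall>b\<in>B. \<not> E v b)))"

datatype Xkind = XH | XM | XI
datatype Ykind = YH | YI | YA | YE | YB | YM

definition hom_on :: "('a \<Rightarrow> 'a \<Rightarrow> bool) \<Rightarrow> 'a set \<Rightarrow> ('a \<Rightarrow> 'a) \<Rightarrow> bool" where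
  "hom_on E A f \<longleftrightarrow> (\<forall>x\<in>A. \<forall>y\<in>A. E x y \<longrightarrow> E (f x) (f y))"

definition emb_on :: "('a \<Rightarrow> 'a \<Rightarrow> bool) \<Rightarrow> 'a set \<Rightarrow> ('a \<Rightarrow> 'a) \<Rightarrow> bool" where
  "emb_on E A f \<longleftrightarrow> inj_on f A \<and> (\<forall>x\<in>A. \<forall>y\<in>A. E x y \<longleftrightarrow> E (f x) (f y))"

fun Xmorph :: "Xkind \<Rightarrow> ('a \<Rightarrow> 'a \<Rightarrow> bool) \<Rightarrow> 'a set \<Rightarrow> ('a \<Rightarrow> 'a) \<Rightarrow> bool" where
  "Xmorph XH E A f \<longleftrightarrow> hom_on E A f"
| "Xmorph XM E A f \<longleftrightarrow> hom_on E A f \<and> inj_on f A"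
| "Xmorph XI E A f \<longleftrightarrow> emb_on E A f"

fun Ymorph :: "Ykind \<Rightarrow> 'a set \<Rightarrow> ('a \<Rightarrow> 'a \<Rightarrow> bool) \<Rightarrow> ('a \<Rightarrow> 'a) \<Rightarrow> bool" where
  "Ymorph YH V E g \<longleftrightarrow> g ` V \<subseteq> V \<and> hom_on E V g"
| "Ymorph YI V E g \<longleftrightarrow> g ` V \<subseteq> V \<and> emb_on E V g"
| "Ymorph YA V E g \<longleftrightarrow> bij_betw g V V \<and> emb_on E V g"
| "Ymorph YE V E g \<longleftrightarrow> g ` V = V \<and> hom_on E V g"
| "Ymorph YB V E g \<longleftrightarrow> bij_betw g V V \<and> hom_on E V g"
| "Ymorph YM V E g \<longleftrightarrow> g ` V \<subseteq> V \<and> inj_on g V \<and> hom_on E V g"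

definition XY_homogeneous :: "Xkind \<Rightarrow> Ykind \<Rightarrow> 'a set \<Rightarrow> ('a \<Rightarrow> 'a \<Rightarrow> bool) \<Rightarrow> bool" where
  "XY_homogeneous X Y V E \<longleftrightarrow>
     (\<forall>A f. finite A \<and> A \<subseteq> V \<and> f ` A \<subseteq> V \<and> Xmorph X E A f \<longrightarrow>
        (\<exists>g. Ymorph Y V E g \<and> (\<forall>x\<in>A. g x = f x)))"

end

theory Submission
  imports Defs
begin

definition piso :: "('a \<Rightarrow> 'a \<Rightarrow> bool) \<Rightarrow> ('a \<times> 'a) set \<Rightarrow> bool" where
  "piso E P \<longleftrightarrow> (\<forall>x y x' y'. (x,y) \<in> P \<longrightarrow> (x',y') \<in> P \<longrightarrow> (x = x' \<longleftrightarrow> y = y') \<and> (E x x' \<longleftrightarrow> E y y'))"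

lemma piso_conv: "piso E P \<Longrightarrow> piso E (converse P)"
  unfolding piso_def by blast

lemma henson_graph:
  assumes "is_Henson n V E"
  shows "\<And>x y. E x y \<Longrightarrow> x \<in> V \<and> y \<in> V" "\<And>x y. E x y \<Longrightarrow> E y x" "\<And>x. \<not> E x x"
  using assms unfolding is_Henson_def graph_def by simp_all

lemma henson_ext:
  assumes "is_Henson n V E" "finite A" "finite B" "A \<subseteq> V" "B \<subseteq> V" "A \<inter> B = {}" "K_free (n - 1) E A"
  shows "\<exists>v\<in>V. v \<notin> A \<and> v \<notin> B \<and> (\<forall>a\<in>A. E v a) \<and> (\<forall>b\<in>B. \<not> E v b)"
proof -
  have "\<forall>A B. finite A \<and> finite B \<and> A \<subseteq> V \<and> B \<subseteq> V \<and> A \<inter> B = {} \<and> K_free (n - 1) E A \<longrightarrow>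
        (\<exists>v\<in>V. v \<notin> A \<and> v \<notin> B \<and> (\<forall>a\<in>A. E v a) \<and> (\<forall>b\<in>B. \<not> E v b))"
    using assms(1) unfolding is_Henson_def by (elim conjE)
  then show ?thesis using assms(2-) by simp
qed

lemma henson_Kfree: "is_Henson n V E \<Longrightarrow> K_free n E V"
  unfolding is_Henson_def by (elim conjE)

lemma forth:
  assumes H: "is_Henson n V E" and n: "n \<ge> 3" and P: "piso E P" "finite P" "P \<subseteq> V \<times> V" and v: "v \<in> V"
  shows "\<exists>w\<in>V. piso E (insert (v,w) P)"
proof (cases "v \<in> Domain P")
  case True
  then obtain w where "(v,w) \<in> P" by blast
  moreover have "w \<in> V" using \<open>(v,w) \<in> P\<close> P(3) by blast
  ultimately show ?thesis using P(1) by (metis insert_absorb)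
next
  case False
  note sym = henson_graph(2)[OF H] and irr = henson_graph(3)[OF H]
  define A where "A = {y. \<exists>x. (x,y) \<in> P \<and> E v x}"
  define B where "B = {y. \<exists>x. (x,y) \<in> P \<and> \<not> E v x}"
  have AP: "A \<subseteq> snd ` P" "B \<subseteq> snd ` P" unfolding A_def B_def by force+
  have fin: "finite A" "finite B" using AP P(2) finite_subset by blast+
  have sub: "A \<subseteq> V" "B \<subseteq> V" using AP P(3) by force+
  have disj: "A \<inter> B = {}" using P(1) unfolding A_def B_def piso_def by blast
  have kf: "K_free (n - 1) E A"
    unfolding K_free_def
  proof
    assume "\<exists>C\<subseteq>A. finite C \<and> card C = n - 1 \<and> is_clique E C"
    then obtain C where C: "C \<subseteq> A" "finite C" "card C = n - 1" "is_clique E C" by blast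
    have "\<forall>y\<in>C. \<exists>x. (x,y) \<in> P \<and> E v x" using C(1) unfolding A_def by blast
    then obtain h where h: "\<forall>y\<in>C. (h y, y) \<in> P \<and> E v (h y)" by metis
    have inj: "inj_on h C"
      by (rule inj_onI) (use h P(1) in \<open>unfold piso_def, blast\<close>)
    have cl: "is_clique E (h ` C)"
      using C(4) h P(1) unfolding is_clique_def piso_def by blast
    have vn: "v \<notin> h ` C" using h False by blast
    define D where "D = insert v (h ` C)"
    have "finite D" using C(2) D_def by simp
    moreover have "card D = n" using vn C(2,3) inj n unfolding D_def by (simp add: card_image)
    moreover have "D \<subseteq> V" using v h P(3) unfolding D_def by blast
    moreover have "is_clique E D"
      using cl h sym unfolding D_def is_clique_def by blast
    ultimately show False using henson_Kfree[OF H] unfolding K_free_def by blast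
  qed
  obtain w where w: "w \<in> V" "w \<notin> A" "w \<notin> B" "\<forall>a\<in>A. E w a" "\<forall>b\<in>B. \<not> E w b"
    using henson_ext[OF H fin sub disj kf] by blast
  have wR: "\<And>x y. (x,y) \<in> P \<Longrightarrow> y \<noteq> w" using w(2,3) unfolding A_def B_def by blast
  have vD: "\<And>x y. (x,y) \<in> P \<Longrightarrow> x \<noteq> v" using False by blast
  have ed: "\<And>x y. (x,y) \<in> P \<Longrightarrow> E v x \<longleftrightarrow> E w y"
    using w(4,5) unfolding A_def B_def by blast
  have "piso E (insert (v,w) P)"
    unfolding piso_def
  proof (intro allI impI)
    fix x y x' y' assume a: "(x,y) \<in> insert (v,w) P" "(x',y') \<in> insert (v,w) P"
    show "(x = x' \<longleftrightarrow> y = y') \<and> (E x x' \<longleftrightarrow> E y y')"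
    proof -
      consider "x = v" "y = w" "x' = v" "y' = w" | "x = v" "y = w" "(x',y') \<in> P"
        | "(x,y) \<in> P" "x' = v" "y' = w" | "(x,y) \<in> P" "(x',y') \<in> P" using a by blast
      then show ?thesis
      proof cases
        case 1 then show ?thesis using irr by simp
      next
        case 2 then show ?thesis using wR[of x' y'] vD[of x' y'] ed[of x' y'] by auto
      next
        case 3 then show ?thesis using wR[of x y] vD[of x y] ed[of x y] sym by metis
      next
        case 4 then show ?thesis using P(1) unfolding piso_def by blast
      qed
    qed
  qed
  then show ?thesis using w(1) by blast
qed


lemma ext_exists:
  assumes H: "is_Henson n V E" and n: "n \<ge> 3" and P: "piso E P" "finite P" "P \<subseteq> V \<times> V" and v: "v \<in> V"
  shows "\<exists>P'. piso E P' \<and> finite P' \<and> P' \<subseteq> V \<times> V \<and> P \<subseteq> P' \<and> v \<in> Domain P' \<and> v \<in> Range P'"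
proof -
  obtain w where w: "w \<in> V" "piso E (insert (v,w) P)" using forth[OF H n P v] by blast
  define P1 where "P1 = insert (v,w) P"
  have c: "piso E (converse P1)" "finite (converse P1)" "converse P1 \<subseteq> V \<times> V"
    using piso_conv[OF w(2)] P(2,3) w(1) v unfolding P1_def by auto
  obtain u where u: "u \<in> V" "piso E (insert (v,u) (converse P1))" using forth[OF H n c v] by blast
  define P2 where "P2 = insert (u,v) P1"
  have "piso E P2"
  proof -
    have "converse (insert (v,u) (converse P1)) = P2" unfolding P2_def by auto
    then show ?thesis using piso_conv[OF u(2)] by simp
  qed
  moreover have "finite P2" "P2 \<subseteq> V \<times> V" "P \<subseteq> P2" "v \<in> Domain P2" "v \<in> Range P2"
    using P(2,3) u(1) w(1) v unfolding P2_def P1_def by auto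
  ultimately show ?thesis by blast
qed

definition nxt :: "'a set \<Rightarrow> ('a \<Rightarrow> 'a \<Rightarrow> bool) \<Rightarrow> ('a \<times> 'a) set \<Rightarrow> 'a \<Rightarrow> ('a \<times> 'a) set" where
  "nxt V E P v = (SOME P'. piso E P' \<and> finite P' \<and> P' \<subseteq> V \<times> V \<and> P \<subseteq> P' \<and> v \<in> Domain P' \<and> v \<in> Range P')"

primrec chn :: "'a set \<Rightarrow> ('a \<Rightarrow> 'a \<Rightarrow> bool) \<Rightarrow> (nat \<Rightarrow> 'a) \<Rightarrow> ('a \<times> 'a) set \<Rightarrow> nat \<Rightarrow> ('a \<times> 'a) set" where
  "chn V E e P0 0 = P0"
| "chn V E e P0 (Suc k) = nxt V E (chn V E e P0 k) (e k)"

lemma nxt_prop: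
  assumes H: "is_Henson n V E" and n: "n \<ge> 3" and P: "piso E P" "finite P" "P \<subseteq> V \<times> V" and v: "v \<in> V"
  shows "piso E (nxt V E P v) \<and> finite (nxt V E P v) \<and> nxt V E P v \<subseteq> V \<times> V \<and> P \<subseteq> nxt V E P v
    \<and> v \<in> Domain (nxt V E P v) \<and> v \<in> Range (nxt V E P v)"
  unfolding nxt_def by (rule someI_ex[OF ext_exists[OF H n P v]])

lemma piso_ext:
  assumes H: "is_Henson n V E" and n: "n \<ge> 3" and A: "finite A" "A \<subseteq> V" "f ` A \<subseteq> V" "emb_on E A f"
  shows "\<exists>g. bij_betw g V V \<and> emb_on E V g \<and> (\<forall>x\<in>A. g x = f x)"
proof -
  have kf0: "K_free (n - 1) E {}" unfolding K_free_def using n by auto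
  obtain v0 where "v0 \<in> V" using henson_ext[OF H _ _ _ _ _ kf0, of "{}"] by auto
  then have Vne: "V \<noteq> {}" by blast
  have cV: "countable V" using H unfolding is_Henson_def by (elim conjE)
  define e where "e = from_nat_into V"
  have eV: "range e = V" unfolding e_def using Vne cV by simp
  define P0 where "P0 = (\<lambda>x. (x, f x)) ` A"
  have P0: "piso E P0" "finite P0" "P0 \<subseteq> V \<times> V"
    using A unfolding P0_def piso_def emb_on_def inj_on_def by auto
  define ch where "ch = chn V E e P0"
  have inv: "piso E (ch k) \<and> finite (ch k) \<and> ch k \<subseteq> V \<times> V" for k
  proof (induction k)
    case 0 then show ?case using P0 unfolding ch_def by simp
  next
    case (Suc k)
    have "e k \<in> V" using eV by blast
    then show ?case using nxt_prop[OF H n _ _ _ \<open>e k \<in> V\<close>] Suc unfolding ch_def by simp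
  qed
  have step: "ch k \<subseteq> ch (Suc k) \<and> e k \<in> Domain (ch (Suc k)) \<and> e k \<in> Range (ch (Suc k))" for k
  proof -
    have "e k \<in> V" using eV by blast
    then show ?thesis using nxt_prop[OF H n _ _ _ \<open>e k \<in> V\<close>] inv[of k] unfolding ch_def by simp
  qed
  have mono: "k \<le> m \<Longrightarrow> ch k \<subseteq> ch m" for k m
    using lift_Suc_mono_le[of ch, OF _] step by blast
  define Q where "Q = (\<Union>k. ch k)"
  have QV: "Q \<subseteq> V \<times> V" using inv unfolding Q_def by blast
  have Qp: "piso E Q"
    unfolding piso_def
  proof (intro allI impI)
    fix x y x' y' assume a: "(x,y) \<in> Q" "(x',y') \<in> Q"
    then obtain k m where km: "(x,y) \<in> ch k" "(x',y') \<in> ch m" unfolding Q_def by blast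
    have "(x,y) \<in> ch (max k m)" "(x',y') \<in> ch (max k m)" using km mono[of k "max k m"] mono[of m "max k m"] by auto
    then show "(x = x' \<longleftrightarrow> y = y') \<and> (E x x' \<longleftrightarrow> E y y')" using inv[of "max k m"] unfolding piso_def by blast
  qed
  have Dom: "v \<in> V \<Longrightarrow> \<exists>y. (v,y) \<in> Q" for v
  proof -
    assume "v \<in> V" then obtain k where "v = e k" using eV by blast
    then show ?thesis using step[of k] unfolding Q_def by blast
  qed
  have Ran: "v \<in> V \<Longrightarrow> \<exists>x. (x,v) \<in> Q" for v
  proof -
    assume "v \<in> V" then obtain k where "v = e k" using eV by blast
    then show ?thesis using step[of k] unfolding Q_def by blast
  qed
  define g where "g x = (THE y. (x,y) \<in> Q)" for x
  have gQ: "(x,y) \<in> Q \<Longrightarrow> g x = y" for x y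
    unfolding g_def by (rule the_equality) (use Qp in \<open>unfold piso_def, blast\<close>)+
  have gin: "x \<in> V \<Longrightarrow> (x, g x) \<in> Q" for x using Dom gQ by blast
  have inj: "inj_on g V"
    by (rule inj_onI) (metis gin Qp piso_def)
  have img: "g ` V = V"
  proof
    show "g ` V \<subseteq> V" using gin QV by blast
    show "V \<subseteq> g ` V"
    proof
      fix y assume "y \<in> V"
      then obtain x where "(x,y) \<in> Q" using Ran by blast
      then show "y \<in> g ` V" using gQ QV by force
    qed
  qed
  have emb: "emb_on E V g"
    unfolding emb_on_def
  proof (intro conjI ballI inj)
    fix x y assume "x \<in> V" "y \<in> V"
    then have "(x, g x) \<in> Q" "(y, g y) \<in> Q" using gin by auto
    then show "E x y \<longleftrightarrow> E (g x) (g y)" using Qp unfolding piso_def by blast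
  qed
  have extf: "\<forall>x\<in>A. g x = f x"
  proof
    fix x assume "x \<in> A"
    then have "(x, f x) \<in> ch 0" unfolding ch_def P0_def by simp
    then have "(x, f x) \<in> Q" unfolding Q_def by blast
    then show "g x = f x" by (rule gQ)
  qed
  have "bij_betw g V V" by (simp add: bij_betw_def inj img)
  then show ?thesis using emb extf by blast
qed


lemma aut_Ymorph:
  assumes "bij_betw g V V" "emb_on E V g"
  shows "Ymorph Y V E g"
proof -
  have h: "hom_on E V g" using assms(2) unfolding emb_on_def hom_on_def by simp
  have i: "g ` V = V" "inj_on g V" using assms(1) unfolding bij_betw_def by simp_all
  show ?thesis by (cases Y) (use assms h i in simp_all)
qed

lemma Ymorph_endo:
  assumes "Ymorph Y V E g"
  shows "g ` V \<subseteq> V \<and> hom_on E V g"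
proof (cases Y)
  case YA
  then have "bij_betw g V V" "emb_on E V g" using assms by simp_all
  then show ?thesis unfolding bij_betw_def emb_on_def hom_on_def by auto
next
  case YB
  then show ?thesis using assms by (simp add: bij_betw_def)
qed (use assms in \<open>auto simp: emb_on_def hom_on_def\<close>)

lemma part1:
  assumes H: "is_Henson n V E" and n: "n \<ge> 3"
  shows "XY_homogeneous XI Y V E"
  unfolding XY_homogeneous_def
proof (intro allI impI)
  fix A f assume a: "finite A \<and> A \<subseteq> V \<and> f ` A \<subseteq> V \<and> Xmorph XI E A f"
  then have fa: "finite A" "A \<subseteq> V" "f ` A \<subseteq> V" "emb_on E A f" by simp_all
  obtain g where g: "bij_betw g V V" "emb_on E V g" "\<forall>x\<in>A. g x = f x"
    using piso_ext[OF H n fa] by (elim exE conjE)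
  have "Ymorph Y V E g" by (rule aut_Ymorph[OF g(1,2)])
  then show "\<exists>g. Ymorph Y V E g \<and> (\<forall>x\<in>A. g x = f x)" using g(3) by (intro exI conjI)
qed

lemma cliques:
  assumes H: "is_Henson n V E" and n: "n \<ge> 3" and ab: "a \<in> V" "b \<in> V" "a \<noteq> b" "\<not> E a b"
  shows "k \<le> n - 2 \<Longrightarrow> \<exists>C. finite C \<and> card C = k \<and> C \<subseteq> V \<and> is_clique E C \<and> a \<notin> C \<and> b \<notin> C \<and> (\<forall>c\<in>C. E c a \<and> E c b)"
proof (induction k)
  case 0
  show ?case by (rule exI[of _ "{}"]) (simp add: is_clique_def)
next
  case (Suc k)
  note sym = henson_graph(2)[OF H]
  obtain C where C: "finite C" "card C = k" "C \<subseteq> V" "is_clique E C" "a \<notin> C" "b \<notin> C" "\<forall>c\<in>C. E c a \<and> E c b"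
    using Suc.IH Suc.prems by (meson Suc_leD)
  define A where "A = insert a (insert b C)"
  have fA: "finite A" "A \<subseteq> V" "A \<inter> {} = {}" using C ab unfolding A_def by auto
  have kf: "K_free (n - 1) E A"
    unfolding K_free_def
  proof
    assume "\<exists>D\<subseteq>A. finite D \<and> card D = n - 1 \<and> is_clique E D"
    then obtain D where D: "D \<subseteq> A" "finite D" "card D = n - 1" "is_clique E D" by blast
    have "\<not> (a \<in> D \<and> b \<in> D)" using D(4) ab unfolding is_clique_def by blast
    then have "D \<subseteq> insert a C \<or> D \<subseteq> insert b C" using D(1) unfolding A_def by blast
    moreover have "card (insert a C) = Suc k" "card (insert b C) = Suc k" using C by simp_all
    ultimately have "card D \<le> Suc k" using C(1) by (metis card_mono finite_insert)
    then show False using D(3) Suc.prems n by simp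
  qed
  obtain v where v: "v \<in> V" "v \<notin> A" "\<forall>x\<in>A. E v x"
    using henson_ext[OF H fA(1) _ fA(2) _ fA(3) kf] by auto
  show ?case
  proof (rule exI[of _ "insert v C"], intro conjI)
    show "finite (insert v C)" using C by simp
    show "card (insert v C) = Suc k" using C v unfolding A_def by simp
    show "insert v C \<subseteq> V" using C v by simp
    show "is_clique E (insert v C)" unfolding is_clique_def
    proof (intro ballI impI)
      fix x y assume xy: "x \<in> insert v C" "y \<in> insert v C" "x \<noteq> y"
      have vc: "\<And>c. c \<in> C \<Longrightarrow> E v c" using v(3) unfolding A_def by simp
      show "E x y"
      proof (cases "x = v")
        case True then show ?thesis using xy vc by simp
      next
        case False
        then have "x \<in> C" using xy by simp
        then show ?thesis using xy C(4) vc sym unfolding is_clique_def by auto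
      qed
    qed
    show "a \<notin> insert v C" "b \<notin> insert v C" using C v unfolding A_def by auto
    show "\<forall>c\<in>insert v C. E c a \<and> E c b" using C v unfolding A_def by auto
  qed
qed

lemma part2:
  assumes H: "is_Henson n V E" and n: "n \<ge> 3" and X: "X \<in> {XH, XM}"
  shows "\<not> XY_homogeneous X Y V E"
proof
  assume hom: "XY_homogeneous X Y V E"
  note sym = henson_graph(2)[OF H] and irr = henson_graph(3)[OF H]
  have kf0: "K_free (n - 1) E {}" unfolding K_free_def using n by auto
  obtain a where a: "a \<in> V" using henson_ext[OF H _ _ _ _ _ kf0, of "{}"] by auto
  obtain b where b: "b \<in> V" "b \<noteq> a" "\<not> E b a" using henson_ext[OF H _ _ _ _ _ kf0, of "{a}"] a by auto
  have kf1: "K_free (n - 1) E {a}"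
    unfolding K_free_def
  proof
    assume "\<exists>C\<subseteq>{a}. finite C \<and> card C = n - 1 \<and> is_clique E C"
    then obtain C where "C \<subseteq> {a}" "card C = n - 1" by blast
    then have "card C \<le> 1" using card_mono[of "{a}" C] by simp
    then show False using n \<open>card C = n - 1\<close> by simp
  qed
  obtain d where d: "d \<in> V" "E d a" using henson_ext[OF H _ _ _ _ _ kf1, of "{}"] a by auto
  define f where "f x = (if x = b then d else x)" for x
  have ab: "\<not> E a b" using b sym by blast
  have fh: "hom_on E {a,b} f" unfolding hom_on_def using irr ab b sym by auto
  have fi: "inj_on f {a,b}" unfolding f_def using b irr d by (auto simp: inj_on_def)
  have "Xmorph X E {a,b} f" using X fh fi by auto
  moreover have "f ` {a,b} \<subseteq> V" using a d b unfolding f_def by auto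
  ultimately have pre: "finite {a,b} \<and> {a,b} \<subseteq> V \<and> f ` {a,b} \<subseteq> V \<and> Xmorph X E {a,b} f"
    using a b by simp
  obtain g where g: "Ymorph Y V E g" "\<forall>x\<in>{a,b}. g x = f x"
    using hom[unfolded XY_homogeneous_def, rule_format, OF pre] by blast
  have gV: "g ` V \<subseteq> V" and gh: "hom_on E V g" using Ymorph_endo[OF g(1)] by auto
  have ga: "g a = a" and gb: "g b = d" using g(2) b unfolding f_def by auto
  obtain C where C: "finite C" "card C = n - 2" "C \<subseteq> V" "is_clique E C" "a \<notin> C" "b \<notin> C" "\<forall>c\<in>C. E c a \<and> E c b"
    using cliques[OF H n a b(1) b(2)[symmetric] ab, of "n - 2"] by auto
  define S where "S = insert a (insert b C)"
  have SV: "S \<subseteq> V" using C a b unfolding S_def by auto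
  have adj: "\<And>x y. x \<in> S \<Longrightarrow> y \<in> S \<Longrightarrow> x \<noteq> y \<Longrightarrow> E (g x) (g y)"
  proof -
    fix x y assume xy: "x \<in> S" "y \<in> S" "x \<noteq> y"
    have Eg: "\<And>u w. u \<in> V \<Longrightarrow> w \<in> V \<Longrightarrow> E u w \<Longrightarrow> E (g u) (g w)" using gh unfolding hom_on_def by blast
    have "E (g a) (g b)" using ga gb d sym by simp
    then have gab: "E (g a) (g b)" "E (g b) (g a)" using sym by auto
    show "E (g x) (g y)"
    proof (cases "x \<in> C")
      case xC: True
      show ?thesis
      proof (cases "y \<in> C")
        case True then show ?thesis using xC xy C(3,4) Eg unfolding is_clique_def by blast
      next
        case False then have "y = a \<or> y = b" using xy unfolding S_def by blast
        then show ?thesis using xC C(3,7) Eg a b(1) by blast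
      qed
    next
      case xC: False
      then have xab: "x = a \<or> x = b" using xy unfolding S_def by blast
      show ?thesis
      proof (cases "y \<in> C")
        case True then show ?thesis using xab C(3,7) Eg a b(1) sym by blast
      next
        case False then have "y = a \<or> y = b" using xy unfolding S_def by blast
        then show ?thesis using xab xy(3) gab by blast
      qed
    qed
  qed
  have inj: "inj_on g S"
    by (rule inj_onI) (metis adj irr)
  have "card S = n" using C b(2) n unfolding S_def by simp
  then have "card (g ` S) = n" using inj by (simp add: card_image)
  moreover have "finite (g ` S)" using C unfolding S_def by simp
  moreover have "g ` S \<subseteq> V" using SV gV by blast
  moreover have "is_clique E (g ` S)" unfolding is_clique_def using adj by blast
  ultimately show False using henson_Kfree[OF H] unfolding K_free_def by blast
qed

theorem mainTheorem9:
  fixes n :: nat and V :: "'a set" and E :: "'a \<Rightarrow> 'a \<Rightarrow> bool"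
  assumes "n \<ge> 3" and "is_Henson n V E"
  shows "(\<forall>Y. XY_homogeneous XI Y V E) \<and>
         (\<forall>X\<in>{XH, XM}. \<forall>Y. \<not> XY_homogeneous X Y V E)"
  using part1[OF assms(2,1)] part2[OF assms(2,1)] by blast

end
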